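(* Let $\mathfrak{k}$ be a field, $n\ge2$, $r_1,\dots,r_n$ positive integers, and ${\mathcal A}=(x_{i_1\ldots i_n})_{1\le i_j\le r_j}$ a box-shaped matrix of distinct indeterminates with polynomial ring $\mathfrak{k}[{\mathcal A}]$. For $l=1,\dots,n$ let $I_l=I_2({\mathcal A}_l)\mathfrak{k}[{\mathcal A}]+(x_{i_1\ldots i_n}: i_l=r_l)$, where ${\mathcal A}_l$ is the sub-box-shaped matrix of entries with $i_l<r_l$. Then $\bigcap_{l=1}^n I_l=I_2({\mathcal A})+(x_{r_1\ldots r_n})$.
   Context: $\mathfrak{k}$ is algebraically closed of characteristic $0$. The $2\times2$ minors of a box-shaped matrix $(a_{i_1\ldots i_n})$ are the elements $a_{i_1\ldots i_l\ldots i_n}a_{j_1\ldots j_l\ldots j_n}-a_{i_1\ldots i_{l-1}j_li_{l+1}\ldots i_n}a_{j_1\ldots j_{l-1}i_lj_{l+1}\ldots j_n}$ for any coordinate $l$ and any two index points; $I_2(\cdot)$ denotes the ideal they generate. *)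

theory Defs
  imports "HOL-Library.Poly_Mapping"
begin

text \<open>Polynomials in indeterminates indexed by index points (lists of naturals):
  the polynomial ring is (nat list \<Rightarrow>0 nat) \<Rightarrow>0 'k (monomials \<Rightarrow> coefficients).\<close>

type_synonym 'k mpoly = "(nat list \<Rightarrow>\<^sub>0 nat) \<Rightarrow>\<^sub>0 'k"

definition Var :: "nat list \<Rightarrow> 'k::comm_ring_1 mpoly" where
  "Var p = Poly_Mapping.single (Poly_Mapping.single p 1) 1"

definition ideal_gen :: "'a::comm_ring_1 set \<Rightarrow> 'a set" where
  "ideal_gen S = {x. \<exists>F c. finite F \<and> F \<subseteq> S \<and> x = (\<Sum>s\<in>F. c s * s)}"

text \<open>Index points of the box with sizes r (coordinates 0..length r - 1, entries 1..r!j).\<close>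
definition box :: "nat list \<Rightarrow> nat list set" where
  "box r = {p. length p = length r \<and> (\<forall>j<length r. 1 \<le> p ! j \<and> p ! j \<le> r ! j)}"

definition minors2 :: "nat list set \<Rightarrow> 'k::comm_ring_1 mpoly set" where
  "minors2 P = {Var p * Var q - Var (p[l := q ! l]) * Var (q[l := p ! l]) | p q l.
                  p \<in> P \<and> q \<in> P \<and> l < length p}"

definition I2 :: "nat list set \<Rightarrow> 'k::comm_ring_1 mpoly set" where
  "I2 P = ideal_gen (minors2 P)"

definition subbox :: "nat list \<Rightarrow> nat \<Rightarrow> nat list set" where
  "subbox r l = {p \<in> box r. p ! l < r ! l}"

definition I_l :: "nat list \<Rightarrow> nat \<Rightarrow> 'k::comm_ring_1 mpoly set" where
  "I_l r l = ideal_gen (minors2 (subbox r l) \<union> {Var p | p. p \<in> box r \<and> p ! l = r ! l})"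

end

theory Submission
  imports Defs
begin

section \<open>Ideal generation\<close>

lemma ig_zero: "0 \<in> ideal_gen S"
  unfolding ideal_gen_def by (rule CollectI, rule exI[of _ "{}"]) auto

lemma ig_gen: "s \<in> S \<Longrightarrow> s \<in> ideal_gen S"
  unfolding ideal_gen_def by (rule CollectI, rule exI[of _ "{s}"], rule exI[of _ "\<lambda>_. 1"]) auto

lemma ig_add:
  assumes "x \<in> ideal_gen S" "y \<in> ideal_gen S"
  shows "x + y \<in> ideal_gen S"
proof -
  obtain F1 c1 where 1: "finite F1" "F1 \<subseteq> S" "x = (\<Sum>s\<in>F1. c1 s * s)"
    using assms(1) unfolding ideal_gen_def by blast
  obtain F2 c2 where 2: "finite F2" "F2 \<subseteq> S" "y = (\<Sum>s\<in>F2. c2 s * s)"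
    using assms(2) unfolding ideal_gen_def by blast
  define c where "c s = (if s \<in> F1 then c1 s else 0) + (if s \<in> F2 then c2 s else 0)" for s
  have fin: "finite (F1 \<union> F2)" using 1 2 by simp
  have "x = (\<Sum>s\<in>F1 \<union> F2. (if s \<in> F1 then c1 s else 0) * s)"
    unfolding 1(3) by (rule sum.mono_neutral_cong_left[OF fin]) auto
  moreover have "y = (\<Sum>s\<in>F1 \<union> F2. (if s \<in> F2 then c2 s else 0) * s)"
    unfolding 2(3) by (rule sum.mono_neutral_cong_left[OF fin]) auto
  ultimately have "x + y = (\<Sum>s\<in>F1 \<union> F2. c s * s)"
    unfolding c_def distrib_right sum.distrib by simp
  moreover have "F1 \<union> F2 \<subseteq> S" using 1 2 by simp
  ultimately show ?thesis unfolding ideal_gen_def using fin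
    by (intro CollectI exI[of _ "F1 \<union> F2"] exI[of _ c] conjI) auto
qed

lemma ig_mult:
  assumes "x \<in> ideal_gen S"
  shows "a * x \<in> ideal_gen S"
proof -
  obtain F c where 1: "finite F" "F \<subseteq> S" "x = (\<Sum>s\<in>F. c s * s)"
    using assms(1) unfolding ideal_gen_def by blast
  have "a * x = (\<Sum>s\<in>F. (a * c s) * s)"
    unfolding 1(3) by (simp add: sum_distrib_left mult.assoc)
  then show ?thesis unfolding ideal_gen_def using 1
    by (intro CollectI exI[of _ F] exI[of _ "\<lambda>s. a * c s"] conjI) auto
qed

lemma ig_mult_right: "x \<in> ideal_gen S \<Longrightarrow> x * a \<in> ideal_gen S"
  using ig_mult[of x S a] by (simp add: mult.commute)

lemma ig_uminus: "x \<in> ideal_gen S \<Longrightarrow> - x \<in> ideal_gen S"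
  using ig_mult[of x S "-1"] by simp

lemma ig_diff: "x \<in> ideal_gen S \<Longrightarrow> y \<in> ideal_gen S \<Longrightarrow> x - y \<in> ideal_gen S"
  using ig_add[of x S "-y"] ig_uminus[of y S] by simp

lemma ig_sum: "finite A \<Longrightarrow> (\<And>a. a \<in> A \<Longrightarrow> f a \<in> ideal_gen S) \<Longrightarrow> sum f A \<in> ideal_gen S"
  by (induction A rule: finite_induct) (auto intro: ig_zero ig_add)

lemma ig_subset:
  assumes "S \<subseteq> ideal_gen T"
  shows "ideal_gen S \<subseteq> ideal_gen T"
proof
  fix x assume "x \<in> ideal_gen S"
  then obtain F c where 1: "finite F" "F \<subseteq> S" "x = (\<Sum>s\<in>F. c s * s)"
    unfolding ideal_gen_def by blast
  show "x \<in> ideal_gen T" unfolding 1(3)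
    by (rule ig_sum) (use 1 assms in \<open>auto intro: ig_mult\<close>)
qed

lemma ig_mono: "S \<subseteq> T \<Longrightarrow> ideal_gen S \<subseteq> ideal_gen T"
  by (rule ig_subset) (auto intro: ig_gen)


section \<open>Monomials and content\<close>

definition Mon :: "(nat list \<Rightarrow>\<^sub>0 nat) \<Rightarrow> 'k::comm_ring_1 mpoly" where
  "Mon m = Poly_Mapping.single m 1"

lemma Mon_add: "Mon (a + b) = (Mon a * Mon b :: 'k::comm_ring_1 mpoly)"
  by (simp add: Mon_def mult_single)

lemma Var_Mon: "Var p = Mon (Poly_Mapping.single p 1)"
  by (simp add: Var_def Mon_def)

lemma finite_box: "finite (box r)"
proof -
  let ?M = "Max (set r \<union> {0})"
  have "box r \<subseteq> {p. set p \<subseteq> {0..?M} \<and> length p = length r}"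
  proof
    fix p assume p: "p \<in> box r"
    have "set p \<subseteq> {0..?M}"
    proof
      fix x assume "x \<in> set p"
      then obtain j where j: "j < length p" "p ! j = x" by (auto simp: in_set_conv_nth)
      then have "j < length r" "x \<le> r ! j" using p unfolding box_def by auto
      moreover have "r ! j \<le> ?M" using \<open>j < length r\<close> by (intro Max_ge) auto
      ultimately have "x \<le> ?M" by linarith
      then show "x \<in> {0..?M}" by simp
    qed
    then show "p \<in> {p. set p \<subseteq> {0..?M} \<and> length p = length r}" using p unfolding box_def by auto
  qed
  then show ?thesis using finite_lists_length_eq[of "{0..?M}" "length r"] finite_subset by blast
qed

lemma box_update:
  assumes "p \<in> box r" "q \<in> box r" "k < length r"
  shows "p[k := q ! k] \<in> box r"
  using assms unfolding box_def by (auto simp: nth_list_update)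

definition bc :: "nat list \<Rightarrow> nat \<Rightarrow> nat \<Rightarrow> (nat list \<Rightarrow>\<^sub>0 nat) \<Rightarrow> nat" where
  "bc r l j m = (\<Sum>p\<in>{p\<in>box r. p ! l = j}. Poly_Mapping.lookup m p)"

lemma bc_add: "bc r l j (a + b) = bc r l j a + bc r l j b"
  by (simp add: bc_def lookup_add sum.distrib)

lemma bc_single: "bc r l j (Poly_Mapping.single q 1) = (if q \<in> box r \<and> q ! l = j then 1 else 0)"
proof -
  have fin: "finite {p\<in>box r. p ! l = j}" using finite_box by simp
  have "bc r l j (Poly_Mapping.single q 1) = (\<Sum>p\<in>{p\<in>box r. p ! l = j}. if q = p then 1 else 0)"
    unfolding bc_def by (intro sum.cong) (auto simp: lookup_single when_def simp del: One_nat_def)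
  also have "\<dots> = (if q \<in> {p\<in>box r. p ! l = j} then 1 else 0)"
    by (rule sum.delta'[OF fin])
  finally show ?thesis by (simp del: One_nat_def)
qed

lemma bc_ge: "p \<in> box r \<Longrightarrow> Poly_Mapping.lookup m p \<le> bc r l (p ! l) m"
  unfolding bc_def by (rule member_le_sum) (use finite_box in auto)

lemma bc_pos:
  assumes "bc r l j m > 0" shows "\<exists>p\<in>box r. p ! l = j \<and> Poly_Mapping.lookup m p > 0"
proof (rule ccontr)
  assume "\<not> ?thesis"
  then have "bc r l j m = 0" unfolding bc_def by (intro sum.neutral) auto
  with assms show False by simp
qed

definition eqv :: "nat list \<Rightarrow> (nat list \<Rightarrow>\<^sub>0 nat) \<Rightarrow> (nat list \<Rightarrow>\<^sub>0 nat) \<Rightarrow> bool" where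
  "eqv r m m' = ((\<forall>p. p \<notin> box r \<longrightarrow> Poly_Mapping.lookup m p = Poly_Mapping.lookup m' p)
                 \<and> (\<forall>l<length r. \<forall>j. bc r l j m = bc r l j m'))"

lemma eqv_refl: "eqv r m m" by (simp add: eqv_def)
lemma eqv_sym: "eqv r m m' \<Longrightarrow> eqv r m' m" by (simp add: eqv_def)
lemma eqv_trans: "eqv r a b \<Longrightarrow> eqv r b c \<Longrightarrow> eqv r a c" by (simp add: eqv_def)
lemma eqv_add: "eqv r a b \<Longrightarrow> eqv r (c + a) (c + b)"
  by (simp add: eqv_def lookup_add bc_add)
lemma eqv_cancel: "eqv r (c + a) (c + b) \<Longrightarrow> eqv r a b"
  by (simp add: eqv_def lookup_add bc_add)

lemma aux_nat: "0 < (n::nat) \<Longrightarrow> n - 1 + 1 = n" by simp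

lemma decomp:
  fixes m :: "nat list \<Rightarrow>\<^sub>0 nat"
  assumes "Poly_Mapping.lookup m q > 0"
  shows "m = (m - Poly_Mapping.single q 1) + Poly_Mapping.single q 1"
proof (rule poly_mapping_eqI)
  fix x
  show "Poly_Mapping.lookup m x = Poly_Mapping.lookup (m - Poly_Mapping.single q 1 + Poly_Mapping.single q 1) x"
  proof (cases "x = q")
    case True
    have e1: "Poly_Mapping.lookup (m - Poly_Mapping.single q 1 + Poly_Mapping.single q 1) q
          = Poly_Mapping.lookup m q - 1 + 1"
      by (simp only: lookup_add lookup_minus lookup_single_eq)
    have e2: "Poly_Mapping.lookup m q - 1 + 1 = Poly_Mapping.lookup m q" using assms by linarith
    show ?thesis unfolding True by (rule sym, rule trans[OF e1 e2])
  next
    case False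
    then show ?thesis by (simp add: lookup_add lookup_minus lookup_single_not_eq)
  qed
qed

lemma swap_eqv:
  assumes "p \<in> box r" "q \<in> box r" "k < length r"
  shows "eqv r (Poly_Mapping.single p 1 + Poly_Mapping.single q 1)
               (Poly_Mapping.single (p[k := q ! k]) 1 + Poly_Mapping.single (q[k := p ! k]) 1)"
proof -
  have b: "p[k := q ! k] \<in> box r" "q[k := p ! k] \<in> box r" using box_update assms by auto
  have len: "k < length p" "k < length q" using assms unfolding box_def by auto
  show ?thesis unfolding eqv_def
  proof (intro conjI allI impI)
    fix x assume "x \<notin> box r"
    then show "Poly_Mapping.lookup (Poly_Mapping.single p 1 + Poly_Mapping.single q 1) x =
          Poly_Mapping.lookup (Poly_Mapping.single (p[k := q ! k]) 1 + Poly_Mapping.single (q[k := p ! k]) 1) x"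
      using assms b by (auto simp: lookup_add lookup_single when_def)
  next
    fix l j assume "l < length r"
    show "bc r l j (Poly_Mapping.single p 1 + Poly_Mapping.single q 1) =
          bc r l j (Poly_Mapping.single (p[k := q ! k]) 1 + Poly_Mapping.single (q[k := p ! k]) 1)"
      using assms b len by (cases "l = k") (auto simp: bc_add bc_single nth_list_update simp del: One_nat_def)
  qed
qed

lemma minor_Mon:
  "Var p * Var q - Var p' * Var q' =
   (Mon (Poly_Mapping.single p 1 + Poly_Mapping.single q 1) - Mon (Poly_Mapping.single p' 1 + Poly_Mapping.single q' 1) :: 'k::comm_ring_1 mpoly)"
  by (simp add: Var_Mon Mon_add)

lemma swap_minor:
  assumes "p \<in> box r" "q \<in> box r" "k < length r"
  shows "(Var p * Var q - Var (p[k := q ! k]) * Var (q[k := p ! k]) :: 'k::comm_ring_1 mpoly) \<in> minors2 (box r)"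
  unfolding minors2_def
  by (rule CollectI, intro exI[of _ p] exI[of _ q] exI[of _ k]) (use assms in \<open>auto simp: box_def\<close>)


section \<open>Connectivity of fibres\<close>

lemma move:
  assumes p: "p \<in> box r" and pos: "\<forall>l<length r. bc r l (p ! l) m > 0" and n0: "0 < length r"
  shows "\<exists>m'. eqv r m m' \<and> Poly_Mapping.lookup m' p > 0 \<and> (Mon m - Mon m' :: 'k::comm_ring_1 mpoly) \<in> I2 (box r)"
proof -
  have "\<exists>m' q. eqv r m m' \<and> (Mon m - Mon m' :: 'k mpoly) \<in> I2 (box r) \<and> q \<in> box r
          \<and> Poly_Mapping.lookup m' q > 0 \<and> (\<forall>l<k. q ! l = p ! l)" if "k \<le> length r" for k
    using that
  proof (induction k)
    case 0
    obtain q where "q \<in> box r" "Poly_Mapping.lookup m q > 0" using bc_pos[of r 0 "p ! 0" m] pos n0 by auto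
    then show ?case by (intro exI[of _ m] exI[of _ q]) (auto simp: eqv_refl I2_def ig_zero)
  next
    case (Suc k)
    then obtain m' q where IH: "eqv r m m'" "(Mon m - Mon m' :: 'k mpoly) \<in> I2 (box r)" "q \<in> box r"
       "Poly_Mapping.lookup m' q > 0" "\<forall>l<k. q ! l = p ! l" by auto
    have k: "k < length r" using Suc by simp
    show ?case
    proof (cases "q ! k = p ! k")
      case True
      then show ?thesis using IH by (intro exI[of _ m'] exI[of _ q]) (auto simp: less_Suc_eq)
    next
      case False
      have "bc r k (p ! k) m' = bc r k (p ! k) m" using IH(1) k unfolding eqv_def by simp
      then have "bc r k (p ! k) m' > 0" using pos k by simp
      then obtain q' where q': "q' \<in> box r" "q' ! k = p ! k" "Poly_Mapping.lookup m' q' > 0"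
        using bc_pos by blast
      have qq: "q \<noteq> q'" using False q' by auto
      define m1 where "m1 = m' - Poly_Mapping.single q 1"
      have m'1: "m' = m1 + Poly_Mapping.single q 1" unfolding m1_def by (rule decomp[OF IH(4)])
      have "Poly_Mapping.lookup m1 q' > 0" using q'(3) qq unfolding m1_def
        by (simp add: lookup_minus lookup_single_not_eq)
      define m2 where "m2 = m1 - Poly_Mapping.single q' 1"
      have m12: "m1 = m2 + Poly_Mapping.single q' 1" unfolding m2_def by (rule decomp) fact
      define q1 where "q1 = q[k := q' ! k]"
      define q1' where "q1' = q'[k := q ! k]"
      define m'' where "m'' = m2 + (Poly_Mapping.single q1 1 + Poly_Mapping.single q1' 1)"
      have m'eq: "m' = m2 + (Poly_Mapping.single q 1 + Poly_Mapping.single q' 1)"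
        using m'1 m12 by (simp add: add_ac)
      have e: "eqv r m' m''" unfolding m'eq m''_def q1_def q1'_def
        by (rule eqv_add, rule swap_eqv) (use IH q' k in auto)
      have "(Mon m' - Mon m'' :: 'k mpoly) = Mon m2 * (Var q * Var q' - Var q1 * Var q1')"
        unfolding m'eq m''_def minor_Mon Mon_add by (simp add: algebra_simps)
      moreover have "(Var q * Var q' - Var q1 * Var q1' :: 'k mpoly) \<in> minors2 (box r)"
        unfolding q1_def q1'_def by (rule swap_minor) (use IH q' k in auto)
      ultimately have "(Mon m' - Mon m'' :: 'k mpoly) \<in> I2 (box r)"
        unfolding I2_def by (auto intro: ig_mult ig_gen)
      moreover have "(Mon m - Mon m'' :: 'k mpoly) = (Mon m - Mon m') + (Mon m' - Mon m'')" by simp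
      ultimately have 1: "(Mon m - Mon m'' :: 'k mpoly) \<in> I2 (box r)"
        using ig_add[OF IH(2)[unfolded I2_def]] unfolding I2_def by metis
      have 2: "Poly_Mapping.lookup m'' q1 > 0" unfolding m''_def by (simp add: lookup_add)
      have 3: "q1 \<in> box r" unfolding q1_def by (rule box_update) (use IH q' k in auto)
      have lq: "k < length q" using IH(3) k unfolding box_def by auto
      have 4: "\<forall>l<Suc k. q1 ! l = p ! l"
        using IH(5) q'(2) lq unfolding q1_def by (auto simp: nth_list_update less_Suc_eq)
      have 5: "eqv r m m''" using eqv_trans[OF IH(1) e] .
      show ?thesis using 1 2 3 4 5 by blast
    qed
  qed
  from this[of "length r"] obtain m' q where mq: "eqv r m m'" "(Mon m - Mon m' :: 'k mpoly) \<in> I2 (box r)"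
    "q \<in> box r" "Poly_Mapping.lookup m' q > 0" "\<forall>l<length r. q ! l = p ! l" by auto
  have "q = p" using mq(3,5) p unfolding box_def by (auto intro: nth_equalityI)
  then show ?thesis using mq by blast
qed

definition deg :: "nat list \<Rightarrow> (nat list \<Rightarrow>\<^sub>0 nat) \<Rightarrow> nat" where
  "deg r m = (\<Sum>p\<in>box r. Poly_Mapping.lookup m p)"

lemma deg_add: "deg r (a + b) = deg r a + deg r b"
  by (simp add: deg_def lookup_add sum.distrib)

lemma deg_single: "q \<in> box r \<Longrightarrow> deg r (Poly_Mapping.single q 1) = 1"
proof -
  assume q: "q \<in> box r"
  have "deg r (Poly_Mapping.single q 1) = (\<Sum>p\<in>box r. if q = p then 1 else 0)"
    unfolding deg_def by (intro sum.cong) (auto simp: lookup_single when_def simp del: One_nat_def)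
  also have "\<dots> = (if q \<in> box r then 1 else 0)"
    by (rule sum.delta'[OF finite_box])
  finally show ?thesis using q by (simp del: One_nat_def)
qed

lemma conn:
  assumes n0: "0 < length r" and e: "eqv r m m'"
  shows "(Mon m - Mon m' :: 'k::comm_ring_1 mpoly) \<in> I2 (box r)"
  using e
proof (induction "deg r m" arbitrary: m m' rule: less_induct)
  case less
  show ?case
  proof (cases "\<exists>p\<in>box r. Poly_Mapping.lookup m p > 0")
    case False
    have "m = m'"
    proof (rule poly_mapping_eqI)
      fix x show "Poly_Mapping.lookup m x = Poly_Mapping.lookup m' x"
      proof (cases "x \<in> box r")
        case True
        have "Poly_Mapping.lookup m' x \<le> bc r 0 (x ! 0) m'" by (rule bc_ge[OF True])
        also have "\<dots> = bc r 0 (x ! 0) m" using less.prems n0 unfolding eqv_def by simp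
        also have "\<dots> = 0" unfolding bc_def using False by (intro sum.neutral) auto
        finally show ?thesis using False True by auto
      next
        case False then show ?thesis using less.prems unfolding eqv_def by simp
      qed
    qed
    then show ?thesis unfolding I2_def by (simp add: ig_zero)
  next
    case True
    then obtain p where p: "p \<in> box r" "Poly_Mapping.lookup m p > 0" by blast
    have "\<forall>l<length r. bc r l (p ! l) m' > 0"
    proof (intro allI impI)
      fix l assume l: "l < length r"
      have "0 < Poly_Mapping.lookup m p" by (rule p(2))
      also have "\<dots> \<le> bc r l (p ! l) m" by (rule bc_ge[OF p(1)])
      also have "\<dots> = bc r l (p ! l) m'" using less.prems l unfolding eqv_def by simp
      finally show "bc r l (p ! l) m' > 0" .
    qed
    then obtain m'' where m'': "eqv r m' m''" "Poly_Mapping.lookup m'' p > 0"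
        "(Mon m' - Mon m'' :: 'k mpoly) \<in> I2 (box r)"
      using move[where 'k = 'k, OF p(1) _ n0] by blast
    define a where "a = m - Poly_Mapping.single p 1"
    define b where "b = m'' - Poly_Mapping.single p 1"
    have ma: "m = a + Poly_Mapping.single p 1" unfolding a_def by (rule decomp[OF p(2)])
    have mb: "m'' = b + Poly_Mapping.single p 1" unfolding b_def by (rule decomp[OF m''(2)])
    have "eqv r m m''" using eqv_trans[OF less.prems m''(1)] .
    then have "eqv r (Poly_Mapping.single p 1 + a) (Poly_Mapping.single p 1 + b)"
      using ma mb by (simp add: add.commute)
    then have ab: "eqv r a b" by (rule eqv_cancel)
    have "deg r m = deg r a + 1" using p(1) ma deg_add deg_single by metis
    then have "deg r a < deg r m" by simp
    then have "(Mon a - Mon b :: 'k mpoly) \<in> I2 (box r)" using less.hyps ab by blast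
    then have "(Var p * (Mon a - Mon b) :: 'k mpoly) \<in> I2 (box r)" unfolding I2_def by (rule ig_mult)
    moreover have "Var p * (Mon a - Mon b) = (Mon m - Mon m'' :: 'k mpoly)"
      unfolding ma mb Mon_add Var_Mon by (simp add: algebra_simps)
    ultimately have "(Mon m - Mon m'' :: 'k mpoly) \<in> I2 (box r)" by simp
    then have "((Mon m - Mon m'') - (Mon m' - Mon m'') :: 'k mpoly) \<in> I2 (box r)"
      using m''(3) unfolding I2_def by (rule ig_diff)
    then show ?thesis by simp
  qed
qed


section \<open>Fibre sums\<close>

definition fs :: "nat list \<Rightarrow> (nat list \<Rightarrow>\<^sub>0 nat) \<Rightarrow> 'k::comm_ring_1 mpoly \<Rightarrow> 'k" where
  "fs r m0 f = (\<Sum>m\<in>{m\<in>Poly_Mapping.keys f. eqv r m m0}. Poly_Mapping.lookup f m)"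

lemma fs_alt:
  assumes "finite A" "Poly_Mapping.keys f \<subseteq> A"
  shows "fs r m0 f = (\<Sum>m\<in>A. if eqv r m m0 then Poly_Mapping.lookup f m else 0)"
proof -
  have "fs r m0 f = (\<Sum>m\<in>Poly_Mapping.keys f. if eqv r m m0 then Poly_Mapping.lookup f m else 0)"
    unfolding fs_def by (rule sum.inter_filter) simp
  also have "\<dots> = (\<Sum>m\<in>A. if eqv r m m0 then Poly_Mapping.lookup f m else 0)"
    by (rule sum.mono_neutral_left) (use assms in \<open>auto simp: in_keys_iff\<close>)
  finally show ?thesis .
qed

lemma fs_add: "fs r m0 (f + g) = fs r m0 f + fs r m0 g"
proof -
  let ?A = "Poly_Mapping.keys f \<union> Poly_Mapping.keys g"
  have fin: "finite ?A" by simp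
  have "fs r m0 (f + g) = (\<Sum>m\<in>?A. if eqv r m m0 then Poly_Mapping.lookup (f + g) m else 0)"
    by (rule fs_alt[OF fin]) (rule keys_add)
  also have "\<dots> = (\<Sum>m\<in>?A. (if eqv r m m0 then Poly_Mapping.lookup f m else 0)
                        + (if eqv r m m0 then Poly_Mapping.lookup g m else 0))"
    by (intro sum.cong) (auto simp: lookup_add)
  also have "\<dots> = (\<Sum>m\<in>?A. if eqv r m m0 then Poly_Mapping.lookup f m else 0)
                  + (\<Sum>m\<in>?A. if eqv r m m0 then Poly_Mapping.lookup g m else 0)"
    by (rule sum.distrib)
  also have "(\<Sum>m\<in>?A. if eqv r m m0 then Poly_Mapping.lookup f m else 0) = fs r m0 f"
    by (rule fs_alt[OF fin, symmetric]) blast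
  also have "(\<Sum>m\<in>?A. if eqv r m m0 then Poly_Mapping.lookup g m else 0) = fs r m0 g"
    by (rule fs_alt[OF fin, symmetric]) blast
  finally show ?thesis .
qed

lemma fs_zero: "fs r m0 0 = 0" by (simp add: fs_def)

lemma fs_diff: "fs r m0 (f - g) = fs r m0 f - fs r m0 g"
  using fs_add[of r m0 "f - g" g] by simp

lemma fs_sum: "finite I \<Longrightarrow> fs r m0 (\<Sum>i\<in>I. F i) = (\<Sum>i\<in>I. fs r m0 (F i))"
  by (induction I rule: finite_induct) (auto simp: fs_zero fs_add)

lemma fs_single: "fs r m0 (Poly_Mapping.single m a) = (if eqv r m m0 then a else 0)"
proof -
  have "fs r m0 (Poly_Mapping.single m a) =
        (\<Sum>x\<in>{m}. if eqv r x m0 then Poly_Mapping.lookup (Poly_Mapping.single m a) x else 0)"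
    by (rule fs_alt) auto
  then show ?thesis by simp
qed

lemma expand: "(f :: 'k::comm_ring_1 mpoly) = (\<Sum>k\<in>Poly_Mapping.keys f. Poly_Mapping.single k (Poly_Mapping.lookup f k))"
proof (rule poly_mapping_eqI)
  fix x
  have "Poly_Mapping.lookup (\<Sum>k\<in>Poly_Mapping.keys f. Poly_Mapping.single k (Poly_Mapping.lookup f k)) x
        = (\<Sum>k\<in>Poly_Mapping.keys f. if k = x then Poly_Mapping.lookup f k else 0)"
    by (simp add: lookup_sum lookup_single when_def)
  also have "\<dots> = (if x \<in> Poly_Mapping.keys f then Poly_Mapping.lookup f x else 0)"
    by (rule sum.delta) simp
  also have "\<dots> = Poly_Mapping.lookup f x" by (simp add: in_keys_iff)
  finally show "Poly_Mapping.lookup f x =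
     Poly_Mapping.lookup (\<Sum>k\<in>Poly_Mapping.keys f. Poly_Mapping.single k (Poly_Mapping.lookup f k)) x" by simp
qed

lemma mult_expand:
  "(c :: 'k::comm_ring_1 mpoly) * Mon e = (\<Sum>k\<in>Poly_Mapping.keys c. Poly_Mapping.single (k + e) (Poly_Mapping.lookup c k))"
proof -
  have "c * Mon e = (\<Sum>k\<in>Poly_Mapping.keys c. Poly_Mapping.single k (Poly_Mapping.lookup c k)) * Mon e"
    by (rule arg_cong[where f="\<lambda>x. x * Mon e"], rule expand)
  also have "\<dots> = (\<Sum>k\<in>Poly_Mapping.keys c. Poly_Mapping.single (k + e) (Poly_Mapping.lookup c k))"
    by (simp add: sum_distrib_right Mon_def mult_single)
  finally show ?thesis .
qed

lemma fs_mult_Mon: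
  "fs r m0 ((c :: 'k::comm_ring_1 mpoly) * Mon e) =
   (\<Sum>k\<in>Poly_Mapping.keys c. if eqv r (k + e) m0 then Poly_Mapping.lookup c k else 0)"
  by (simp add: mult_expand fs_sum fs_single)

lemma fs_minor:
  assumes "eqv r e1 e2"
  shows "fs r m0 ((c :: 'k::comm_ring_1 mpoly) * (Mon e1 - Mon e2)) = 0"
proof -
  have "\<And>k. eqv r (k + e1) m0 = eqv r (k + e2) m0"
    using eqv_add[OF assms] eqv_add[OF eqv_sym[OF assms]] eqv_trans by blast
  then show ?thesis by (simp add: right_diff_distrib fs_diff fs_mult_Mon)
qed

lemma IlA:
  assumes l: "l < length r" and f: "(f :: 'k::comm_ring_1 mpoly) \<in> I_l r l" and nz: "fs r m0 f \<noteq> 0"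
  shows "bc r l (r ! l) m0 > 0"
proof -
  let ?G = "minors2 (subbox r l) \<union> {Var p | p. p \<in> box r \<and> p ! l = r ! l}"
  have "\<exists>F c. finite F \<and> F \<subseteq> ?G \<and> f = (\<Sum>s\<in>F. c s * s)"
    using f unfolding I_l_def ideal_gen_def by simp
  then obtain F c where F: "finite F" "F \<subseteq> ?G" "f = (\<Sum>s\<in>F. c s * s)"
    by blast
  have sne: "(\<Sum>s\<in>F. fs r m0 (c s * s)) \<noteq> 0" using nz unfolding F(3) fs_sum[OF F(1)] .
  have "\<exists>s\<in>F. fs r m0 (c s * s) \<noteq> 0"
  proof (rule ccontr)
    assume "\<not> ?thesis"
    then have "(\<Sum>s\<in>F. fs r m0 (c s * s)) = 0" by (intro sum.neutral) auto
    with sne show False by simp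
  qed
  then obtain s where s: "s \<in> F" "fs r m0 (c s * s) \<noteq> 0" by blast
  have notmin: "s \<notin> minors2 (subbox r l)"
  proof
    assume "s \<in> minors2 (subbox r l)"
    then obtain p q k where pq: "p \<in> subbox r l" "q \<in> subbox r l" "k < length p"
        "s = Var p * Var q - Var (p[k := q ! k]) * Var (q[k := p ! k])"
      unfolding minors2_def by blast
    have pq': "p \<in> box r" "q \<in> box r" "k < length r" using pq unfolding subbox_def box_def by auto
    have "eqv r (Poly_Mapping.single p 1 + Poly_Mapping.single q 1)
               (Poly_Mapping.single (p[k := q ! k]) 1 + Poly_Mapping.single (q[k := p ! k]) 1)"
      by (rule swap_eqv[OF pq'])
    then have "fs r m0 (c s * s) = 0" unfolding pq(4) minor_Mon by (rule fs_minor)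
    with s show False by simp
  qed
  have "s \<in> {Var p | p. p \<in> box r \<and> p ! l = r ! l}" using s(1) F(2) notmin by blast
  then obtain p where p: "p \<in> box r" "p ! l = r ! l" "s = Var p" by blast
  from s(2) have sne2: "(\<Sum>k\<in>Poly_Mapping.keys (c s). if eqv r (k + Poly_Mapping.single p 1) m0 then Poly_Mapping.lookup (c s) k else 0) \<noteq> 0"
    unfolding p(3) Var_Mon fs_mult_Mon .
  have "\<exists>k. eqv r (k + Poly_Mapping.single p 1) m0"
  proof (rule ccontr)
    assume "\<not> ?thesis"
    then have "(\<Sum>k\<in>Poly_Mapping.keys (c s). if eqv r (k + Poly_Mapping.single p 1) m0 then Poly_Mapping.lookup (c s) k else 0) = 0"
      by (intro sum.neutral) auto
    with sne2 show False by simp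
  qed
  then obtain k where k: "eqv r (k + Poly_Mapping.single p 1) m0" by blast
  then have "bc r l (r ! l) m0 = bc r l (r ! l) (k + Poly_Mapping.single p 1)" using l unfolding eqv_def by simp
  also have "\<dots> = bc r l (r ! l) k + 1" using p by (simp add: bc_add bc_single del: One_nat_def)
  finally show ?thesis by simp
qed


lemma single_sum: "Poly_Mapping.single k (sum g A) = (\<Sum>x\<in>A. Poly_Mapping.single k (g x))"
  by (induction A rule: infinite_finite_induct) (auto simp: single_add)

lemma gen_in_Il:
  assumes r: "\<forall>j<length r. r ! j > 0" and l: "l < length r"
  shows "ideal_gen (minors2 (box r) \<union> {Var r}) \<subseteq> (I_l r l :: 'k::comm_ring_1 mpoly set)"
proof -
  let ?G = "minors2 (subbox r l) \<union> {Var p | p. p \<in> box r \<and> p ! l = r ! l} :: 'k mpoly set"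
  have rbox: "r \<in> box r" using r unfolding box_def by auto
  have V: "(Var p :: 'k mpoly) \<in> ideal_gen ?G" if "p \<in> box r" "p ! l = r ! l" for p
    by (rule ig_gen) (use that in blast)
  have "minors2 (box r) \<union> {Var r} \<subseteq> ideal_gen ?G"
  proof
    fix x :: "'k mpoly" assume "x \<in> minors2 (box r) \<union> {Var r}"
    then consider "x = Var r" | p q k where "p \<in> box r" "q \<in> box r" "k < length p"
        "x = Var p * Var q - Var (p[k := q ! k]) * Var (q[k := p ! k])"
      unfolding minors2_def by blast
    then show "x \<in> ideal_gen ?G"
    proof cases
      case 1 then show ?thesis using V[OF rbox refl] by simp
    next
      case (2 p q k)
      let ?p1 = "p[k := q ! k]"
      let ?q1 = "q[k := p ! k]"
      have k: "k < length r" using 2 unfolding box_def by auto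
      have b: "?p1 \<in> box r" "?q1 \<in> box r" using box_update 2 k by auto
      have ll: "l < length p" "l < length q" using 2 l unfolding box_def by auto
      show ?thesis
      proof (cases "p ! l = r ! l \<or> q ! l = r ! l")
        case True
        then have t2: "?p1 ! l = r ! l \<or> ?q1 ! l = r ! l" using ll
          by (cases "k = l") (auto simp: nth_list_update)
        have i1: "(Var p * Var q :: 'k mpoly) \<in> ideal_gen ?G"
          using True V[of p] V[of q] 2 ig_mult ig_mult_right by blast
        have i2: "(Var ?p1 * Var ?q1 :: 'k mpoly) \<in> ideal_gen ?G"
          using t2 V[of ?p1] V[of ?q1] b ig_mult ig_mult_right by blast
        show ?thesis unfolding 2(4) by (rule ig_diff[OF i1 i2])
      next
        case False
        have "p ! l \<le> r ! l" "q ! l \<le> r ! l" using 2 l unfolding box_def by auto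
        then have lt: "p ! l < r ! l" "q ! l < r ! l" using False by auto
        then have "?p1 ! l < r ! l" "?q1 ! l < r ! l" using ll
          by (cases "k = l"; auto simp: nth_list_update)+
        have sb: "p \<in> subbox r l" "q \<in> subbox r l" using 2 lt unfolding subbox_def by auto
        have "x \<in> minors2 (subbox r l)" unfolding minors2_def 2(4)
          by (rule CollectI, intro exI[of _ p] exI[of _ q] exI[of _ k]) (use 2 sb in auto)
        then show ?thesis by (intro ig_gen) blast
      qed
    qed
  qed
  then show ?thesis unfolding I_l_def by (rule ig_subset)
qed

theorem corollary1p1p1:
  fixes r :: "nat list"
  assumes "length r \<ge> 2"
    and "\<forall>j<length r. r ! j > 0"
  shows "(\<Inter>l\<in>{0..<length r}. (I_l r l :: 'k::field mpoly set))
           = ideal_gen (minors2 (box r) \<union> {Var r})"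
proof
  show "ideal_gen (minors2 (box r) \<union> {Var r}) \<subseteq> (\<Inter>l\<in>{0..<length r}. (I_l r l :: 'k::field mpoly set))"
    by (intro INT_greatest) (use gen_in_Il[where 'k='k, OF assms(2)] in auto)
next
  show "(\<Inter>l\<in>{0..<length r}. (I_l r l :: 'k::field mpoly set)) \<subseteq> ideal_gen (minors2 (box r) \<union> {Var r})"
  proof
    fix f :: "'k mpoly" assume f: "f \<in> (\<Inter>l\<in>{0..<length r}. I_l r l)"
    let ?J = "ideal_gen (minors2 (box r) \<union> {Var r}) :: 'k mpoly set"
    have n0: "0 < length r" using assms(1) by linarith
    have I2J: "I2 (box r) \<subseteq> ?J" unfolding I2_def by (rule ig_mono) blast
    have rbox: "r \<in> box r" using assms(2) unfolding box_def by auto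
    define cond where "cond m = (\<forall>l<length r. bc r l (r ! l) m > 0)" for m
    have condA: "cond m0" if "fs r m0 f \<noteq> 0" for m0
      unfolding cond_def
    proof (intro allI impI)
      fix l assume l: "l < length r"
      then have "f \<in> I_l r l" using f by auto
      then show "bc r l (r ! l) m0 > 0" using IlA[OF l _ that] by blast
    qed
    have cond_eqv: "cond b" if "eqv r a b" "cond a" for a b
      using that unfolding cond_def eqv_def by auto
    define R where "R S = (SOME m'. m' \<in> S \<and> ((\<forall>x\<in>S. cond x) \<longrightarrow> Poly_Mapping.lookup m' r > 0))" for S
    define rho where "rho m = R {x. eqv r x m}" for m
    have rho: "eqv r (rho m) m \<and> (cond m \<longrightarrow> Poly_Mapping.lookup (rho m) r > 0)" for m
    proof -
      let ?S = "{x. eqv r x m}"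
      have "\<exists>m'. m' \<in> ?S \<and> ((\<forall>x\<in>?S. cond x) \<longrightarrow> Poly_Mapping.lookup m' r > 0)"
      proof (cases "cond m")
        case True
        then obtain m' where "eqv r m m'" "Poly_Mapping.lookup m' r > 0"
          using move[where 'k='k, OF rbox _ n0] unfolding cond_def by blast
        then show ?thesis using eqv_sym by blast
      next
        case False
        then show ?thesis using eqv_refl[of r m] by blast
      qed
      then have h: "rho m \<in> ?S \<and> ((\<forall>x\<in>?S. cond x) \<longrightarrow> Poly_Mapping.lookup (rho m) r > 0)"
        unfolding rho_def R_def by (rule someI_ex)
      have "cond m \<Longrightarrow> \<forall>x\<in>?S. cond x" using cond_eqv eqv_sym by blast
      then show ?thesis using h by blast
    qed
    have rho_eq: "rho a = rho b" if "eqv r a b" for a b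
    proof -
      have "{x. eqv r x a} = {x. eqv r x b}" using that eqv_trans eqv_sym by blast
      then show ?thesis unfolding rho_def by simp
    qed
    let ?K = "Poly_Mapping.keys f"
    have "f = (\<Sum>m\<in>?K. Poly_Mapping.single m (Poly_Mapping.lookup f m))" by (rule expand)
    also have "\<dots> = (\<Sum>m\<in>?K. Poly_Mapping.single m (Poly_Mapping.lookup f m) - Poly_Mapping.single (rho m) (Poly_Mapping.lookup f m))
                  + (\<Sum>m\<in>?K. Poly_Mapping.single (rho m) (Poly_Mapping.lookup f m))"
      by (simp add: sum_subtractf)
    finally have fdec: "f = (\<Sum>m\<in>?K. Poly_Mapping.single m (Poly_Mapping.lookup f m) - Poly_Mapping.single (rho m) (Poly_Mapping.lookup f m))
                  + (\<Sum>m\<in>?K. Poly_Mapping.single (rho m) (Poly_Mapping.lookup f m))" .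
    have A: "(\<Sum>m\<in>?K. Poly_Mapping.single m (Poly_Mapping.lookup f m) - Poly_Mapping.single (rho m) (Poly_Mapping.lookup f m)) \<in> ?J"
    proof (rule ig_sum)
      fix m
      have "eqv r m (rho m)" using rho[of m] eqv_sym by blast
      then have "(Mon m - Mon (rho m) :: 'k mpoly) \<in> I2 (box r)" by (rule conn[OF n0])
      then have "Poly_Mapping.single 0 (Poly_Mapping.lookup f m) * (Mon m - Mon (rho m)) \<in> ?J"
        using I2J ig_mult by blast
      moreover have "Poly_Mapping.single 0 (Poly_Mapping.lookup f m) * (Mon m - Mon (rho m))
          = Poly_Mapping.single m (Poly_Mapping.lookup f m) - Poly_Mapping.single (rho m) (Poly_Mapping.lookup f m)"
        by (simp add: Mon_def mult_single right_diff_distrib)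
      ultimately show "Poly_Mapping.single m (Poly_Mapping.lookup f m) - Poly_Mapping.single (rho m) (Poly_Mapping.lookup f m) \<in> ?J"
        by simp
    qed simp
    have B: "(\<Sum>m\<in>?K. Poly_Mapping.single (rho m) (Poly_Mapping.lookup f m)) \<in> ?J"
    proof -
      have "(\<Sum>m\<in>?K. Poly_Mapping.single (rho m) (Poly_Mapping.lookup f m))
          = (\<Sum>\<mu>\<in>rho ` ?K. \<Sum>m\<in>{m\<in>?K. rho m = \<mu>}. Poly_Mapping.single (rho m) (Poly_Mapping.lookup f m))"
        by (rule sum.image_gen) simp
      also have "\<dots> = (\<Sum>\<mu>\<in>rho ` ?K. Poly_Mapping.single \<mu> (fs r \<mu> f))"
      proof (rule sum.cong[OF refl])
        fix \<mu> assume "\<mu> \<in> rho ` ?K"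
        then obtain m1 where m1: "m1 \<in> ?K" "\<mu> = rho m1" by blast
        have set: "{m\<in>?K. rho m = \<mu>} = {m\<in>?K. eqv r m \<mu>}"
        proof (intro Collect_cong conj_cong refl)
          fix m
          show "rho m = \<mu> \<longleftrightarrow> eqv r m \<mu>"
          proof
            assume "rho m = \<mu>"
            then show "eqv r m \<mu>" using rho[of m] eqv_sym by metis
          next
            assume "eqv r m \<mu>"
            moreover have "eqv r \<mu> m1" using rho[of m1] m1(2) by simp
            ultimately have "eqv r m m1" by (rule eqv_trans)
            then show "rho m = \<mu>" using rho_eq m1(2) by simp
          qed
        qed
        have "(\<Sum>m\<in>{m\<in>?K. rho m = \<mu>}. Poly_Mapping.single (rho m) (Poly_Mapping.lookup f m))
            = (\<Sum>m\<in>{m\<in>?K. rho m = \<mu>}. Poly_Mapping.single \<mu> (Poly_Mapping.lookup f m))"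
          by (rule sum.cong) auto
        also have "\<dots> = Poly_Mapping.single \<mu> (\<Sum>m\<in>{m\<in>?K. rho m = \<mu>}. Poly_Mapping.lookup f m)"
          by (rule single_sum[symmetric])
        also have "\<dots> = Poly_Mapping.single \<mu> (fs r \<mu> f)"
          unfolding fs_def set ..
        finally show "(\<Sum>m\<in>{m\<in>?K. rho m = \<mu>}. Poly_Mapping.single (rho m) (Poly_Mapping.lookup f m))
            = Poly_Mapping.single \<mu> (fs r \<mu> f)" .
      qed
      also have "\<dots> \<in> ?J"
      proof (rule ig_sum)
        fix \<mu> assume "\<mu> \<in> rho ` ?K"
        then obtain m1 where m1: "\<mu> = rho m1" by blast
        show "Poly_Mapping.single \<mu> (fs r \<mu> f) \<in> ?J"
        proof (cases "fs r \<mu> f = 0")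
          case True then show ?thesis by (simp add: ig_zero)
        next
          case False
          then have "cond \<mu>" by (rule condA)
          moreover have "eqv r \<mu> m1" using rho[of m1] m1 by simp
          ultimately have "cond m1" using cond_eqv by blast
          then have "Poly_Mapping.lookup \<mu> r > 0" using rho[of m1] m1 by simp
          then have dec: "\<mu> = (\<mu> - Poly_Mapping.single r 1) + Poly_Mapping.single r 1" by (rule decomp)
          have "Poly_Mapping.single \<mu> (fs r \<mu> f) = Poly_Mapping.single (\<mu> - Poly_Mapping.single r 1) (fs r \<mu> f) * Var r"
            unfolding Var_def mult_single using dec by simp
          moreover have "(Var r :: 'k mpoly) \<in> ?J" by (rule ig_gen) simp
          ultimately show ?thesis using ig_mult by metis
        qed
      qed simp
      finally show ?thesis .
    qed
    show "f \<in> ?J" using ig_add[OF A B] fdec by simp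
  qed
qed

end
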